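(* Let $\mathcal{G}_D$ be a bipartite planar graph with an isoradial embedding, let $(f_v(z))_v$ be a special discrete analytic function, and let $\mu$ be a measure on the plane such that the integrals $\int f_b(z)\,d\mu(z)$ are defined (absolutely convergent). Then $F(b)=\int f_b(z)\,d\mu(z)$, $b$ black, is a discrete analytic function, i.e. $\sum_{b\in B}\bar\partial(w,b)F(b)=0$ for every white vertex $w$.
   Context: An isoradial embedding of a planar graph is an embedding in which every face is inscribed in a circle of radius $1$ whose center lies in the closure of the face; the dual is embedded at the circumcenters. For each edge $e$ the rhombus $R(e)$ of side $1$ has as vertices the endpoints of $e$ and of its dual edge; rhombus edges join a vertex of $\mathcal{G}_D$ to a dual vertex. Vertices of $\mathcal{G}_D$ are black ($B$) or white. $\bar\partial$ is the symmetric matrix, zero on non-adjacent pairs, with $\bar\partial(w,b)=\bar\partial(b,w)=i(x-y)$ when $R(wb)$ has vertices $w,x,b,y$ in counterclockwise order (as complex numbers). A special discrete analytic function is a family of functions $f_v(z)$, indexed by the rhombus vertices $v$, such that for each rhombus edge from $v$ to $v'$ with $\mathcal{G}_D$-endpoint $u$, letting $e^{i\alpha}$ be the unit vector along the edge oriented away from $u$ if $u$ is white and towards $u$ if $u$ is black: $f_{v'}=f_v/(z-e^{i\alpha})$ if traversal from $v$ to $v'$ is in the direction of $e^{i\alpha}$, and $f_{v'}=f_v\cdot(z-e^{i\alpha})$ otherwise. *)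

theory Defs
  imports "HOL-Analysis.Analysis"
begin

text \<open>Straight-line embedded graphs in the plane.  Vertices of the graph G_D are
  identified with their positions in the complex plane (an embedding is injective);
  the edge relation E is symmetric.\<close>

definition drawing :: "complex set \<Rightarrow> (complex \<Rightarrow> complex \<Rightarrow> bool) \<Rightarrow> complex set" where
  "drawing V E = V \<union> \<Union>{closed_segment u v | u v. E u v}"

definition plane_graph :: "complex set \<Rightarrow> (complex \<Rightarrow> complex \<Rightarrow> bool) \<Rightarrow> bool" where
  "plane_graph V E \<longleftrightarrow>
     (\<forall>u v. E u v \<longrightarrow> u \<in> V \<and> v \<in> V \<and> u \<noteq> v \<and> E v u) \<and>
     (\<forall>u v u' v'. E u v \<longrightarrow> E u' v' \<longrightarrow> {u, v} \<noteq> {u', v'} \<longrightarrow>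
         closed_segment u v \<inter> closed_segment u' v' \<subseteq> {u, v} \<inter> {u', v'}) \<and>
     (\<forall>u v w. E u v \<longrightarrow> w \<in> V \<longrightarrow> w \<in> closed_segment u v \<longrightarrow> w = u \<or> w = v) \<and>
     (\<forall>K. compact K \<longrightarrow>
         finite (V \<inter> K) \<and> finite {(u, v). E u v \<and> closed_segment u v \<inter> K \<noteq> {}})"

definition faces :: "complex set \<Rightarrow> (complex \<Rightarrow> complex \<Rightarrow> bool) \<Rightarrow> complex set set" where
  "faces V E = components (- drawing V E)"

definition inscribed_center :: "complex set \<Rightarrow> complex set \<Rightarrow> complex \<Rightarrow> bool" where
  "inscribed_center V F c \<longleftrightarrow>
     c \<in> closure F \<and> F \<subseteq> cball c 1 \<and> (\<forall>v \<in> V \<inter> frontier F. cmod (v - c) = 1)"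

definition isoradial :: "complex set \<Rightarrow> (complex \<Rightarrow> complex \<Rightarrow> bool) \<Rightarrow> bool" where
  "isoradial V E \<longleftrightarrow> plane_graph V E \<and> (\<forall>F \<in> faces V E. \<exists>c. inscribed_center V F c)"

definition circumcenter :: "complex set \<Rightarrow> complex set \<Rightarrow> complex" where
  "circumcenter V F = (SOME c. inscribed_center V F c)"

definition right_face :: "complex set \<Rightarrow> (complex \<Rightarrow> complex \<Rightarrow> bool) \<Rightarrow> complex \<Rightarrow> complex \<Rightarrow> complex set" where
  "right_face V E u v = (THE F. F \<in> faces V E \<and>
      (\<forall>\<^sub>F t in at_right (0::real). (u + v) / 2 - of_real t * \<i> * (v - u) \<in> F))"

definition left_face :: "complex set \<Rightarrow> (complex \<Rightarrow> complex \<Rightarrow> bool) \<Rightarrow> complex \<Rightarrow> complex \<Rightarrow> complex set" where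
  "left_face V E u v = (THE F. F \<in> faces V E \<and>
      (\<forall>\<^sub>F t in at_right (0::real). (u + v) / 2 + of_real t * \<i> * (v - u) \<in> F))"

text \<open>Bipartite with black vertices B (white vertices: V - B).\<close>
definition bipartite_col :: "complex set \<Rightarrow> (complex \<Rightarrow> complex \<Rightarrow> bool) \<Rightarrow> complex set \<Rightarrow> bool" where
  "bipartite_col V E B \<longleftrightarrow> B \<subseteq> V \<and> (\<forall>u v. E u v \<longrightarrow> (u \<in> B \<longleftrightarrow> v \<notin> B))"

text \<open>For white w and black b adjacent, the rhombus R(wb) has vertices w, x, b, y in
  counterclockwise order, where x (resp. y) is the circumcenter of the face to the right
  (resp. left) of w \<rightarrow> b; then dbar(w,b) = i (x - y).  dbar is symmetric and zero on
  non-adjacent pairs.\<close>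
definition dbar_wb :: "complex set \<Rightarrow> (complex \<Rightarrow> complex \<Rightarrow> bool) \<Rightarrow> complex \<Rightarrow> complex \<Rightarrow> complex" where
  "dbar_wb V E w b = \<i> * (circumcenter V (right_face V E w b) - circumcenter V (left_face V E w b))"

definition dbar :: "complex set \<Rightarrow> (complex \<Rightarrow> complex \<Rightarrow> bool) \<Rightarrow> complex set \<Rightarrow> complex \<Rightarrow> complex \<Rightarrow> complex" where
  "dbar V E B u v =
     (if E u v then (if u \<in> B then dbar_wb V E v u else dbar_wb V E u v) else 0)"

text \<open>Rhombus vertices: Inl u for a vertex u of G_D, Inr F for the dual vertex of face F.\<close>
type_synonym rvert = "complex + complex set"

fun rpos :: "complex set \<Rightarrow> rvert \<Rightarrow> complex" where
  "rpos V (Inl u) = u"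
| "rpos V (Inr F) = circumcenter V F"

definition rhombus_edge :: "complex set \<Rightarrow> (complex \<Rightarrow> complex \<Rightarrow> bool) \<Rightarrow> complex \<Rightarrow> complex set \<Rightarrow> bool" where
  "rhombus_edge V E u F \<longleftrightarrow> (\<exists>v. E u v \<and> (F = right_face V E u v \<or> F = left_face V E u v))"

text \<open>The unit vector e^{i alpha} of the rhombus edge between u and F: oriented away
  from u if u is white, towards u if u is black.\<close>
definition rdir :: "complex set \<Rightarrow> complex set \<Rightarrow> complex \<Rightarrow> complex set \<Rightarrow> complex" where
  "rdir V B u F = (if u \<in> B then u - circumcenter V F else circumcenter V F - u)"

definition special_dafun ::
  "complex set \<Rightarrow> (complex \<Rightarrow> complex \<Rightarrow> bool) \<Rightarrow> complex set \<Rightarrow> (rvert \<Rightarrow> complex \<Rightarrow> complex) \<Rightarrow> bool" where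
  "special_dafun V E B f \<longleftrightarrow>
     (\<forall>u F. rhombus_edge V E u F \<longrightarrow>
        (\<forall>(v, v') \<in> {(Inl u, Inr F), (Inr F, Inl u)}. \<forall>z. z \<noteq> rdir V B u F \<longrightarrow>
           f v' z = (if rpos V v' - rpos V v = rdir V B u F
                     then f v z / (z - rdir V B u F)
                     else f v z * (z - rdir V B u F))))"

text \<open>Points where f_b (b black) is not defined by the defining relations.\<close>
definition sing_pts :: "complex set \<Rightarrow> (complex \<Rightarrow> complex \<Rightarrow> bool) \<Rightarrow> complex set \<Rightarrow> complex \<Rightarrow> complex set" where
  "sing_pts V E B b = {rdir V B b F | F. rhombus_edge V E b F}"

end

theory Submission
  imports Defs
begin

lemma pg1: "plane_graph V E \<Longrightarrow> (\<forall>u v. E u v \<longrightarrow> u \<in> V \<and> v \<in> V \<and> u \<noteq> v \<and> E v u)"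
  unfolding plane_graph_def by (erule conjunct1)
lemma pg2: "plane_graph V E \<Longrightarrow> (\<forall>u v u' v'. E u v \<longrightarrow> E u' v' \<longrightarrow> {u, v} \<noteq> {u', v'} \<longrightarrow>
         closed_segment u v \<inter> closed_segment u' v' \<subseteq> {u, v} \<inter> {u', v'})"
  unfolding plane_graph_def by (drule conjunct2, erule conjunct1)
lemma pg3: "plane_graph V E \<Longrightarrow> (\<forall>u v w. E u v \<longrightarrow> w \<in> V \<longrightarrow> w \<in> closed_segment u v \<longrightarrow> w = u \<or> w = v)"
  unfolding plane_graph_def by (drule conjunct2, drule conjunct2, erule conjunct1)
lemma pg4: "plane_graph V E \<Longrightarrow> (\<forall>K. compact K \<longrightarrow>
         finite (V \<inter> K) \<and> finite {(u, v). E u v \<and> closed_segment u v \<inter> K \<noteq> {}})"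
  unfolding plane_graph_def by (drule conjunct2, drule conjunct2, erule conjunct2)
lemma pg_edge:
  assumes "plane_graph V E" "E u v"
  shows "u \<in> V" "v \<in> V" "u \<noteq> v" "E v u"
  using pg1[OF assms(1)] assms(2) by auto

lemma pg_cross:
  assumes "plane_graph V E" "E u v" "E a b" "{u, v} \<noteq> {a, b}"
  shows "closed_segment u v \<inter> closed_segment a b \<subseteq> {u, v} \<inter> {a, b}"
  using pg2[OF assms(1)] assms(2-) by blast

lemma pg_vert:
  assumes "plane_graph V E" "E u v" "p \<in> V" "p \<in> closed_segment u v"
  shows "p = u \<or> p = v"
  using pg3[OF assms(1)] assms(2-) by blast

lemma pg_fin:
  assumes "plane_graph V E" "compact K"
  shows "finite (V \<inter> K)" "finite {(u, v). E u v \<and> closed_segment u v \<inter> K \<noteq> {}}"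
  using pg4[OF assms(1)] assms(2) by blast+

lemma seg_param:
  fixes u v p :: complex
  assumes "p \<in> closed_segment u v"
  shows "\<exists>s. 0 \<le> s \<and> s \<le> 1 \<and> p = u + of_real s * (v - u)"
proof -
  obtain s where s: "0 \<le> s" "s \<le> 1" "p = (1 - s) *\<^sub>R u + s *\<^sub>R v"
    using assms in_segment(1) by blast
  have "p = u + of_real s * (v - u)" using s(3) by (simp add: scaleR_conv_of_real algebra_simps)
  thus ?thesis using s by blast
qed

lemma seg_paramI:
  fixes u v :: complex
  assumes "0 \<le> s" "s \<le> 1"
  shows "u + of_real s * (v - u) \<in> closed_segment u v"
proof -
  have "u + of_real s * (v - u) = (1 - s) *\<^sub>R u + s *\<^sub>R v" by (simp add: scaleR_conv_of_real algebra_simps)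
  thus ?thesis using assms in_segment(1) by blast
qed

lemma drawing_iff: "p \<in> drawing V E \<longleftrightarrow> p \<in> V \<or> (\<exists>u v. E u v \<and> p \<in> closed_segment u v)"
  unfolding drawing_def by blast

lemma strip:
  assumes pg: "plane_graph V E" and e: "E u v" and dl: "0 < \<delta>" "\<delta> \<le> 1/2"
  shows "\<exists>\<epsilon>>0. \<forall>s t. \<delta> \<le> s \<and> s \<le> 1 - \<delta> \<and> 0 < \<bar>t\<bar> \<and> \<bar>t\<bar> < \<epsilon> \<longrightarrow>
           u + of_real s * (v - u) + of_real t * \<i> * (v - u) \<notin> drawing V E"
proof -
  define d where "d = v - u"
  have d0: "d \<noteq> 0" using pg_edge[OF pg e] d_def by auto
  hence nd: "cmod d > 0" by simp
  define K where "K = cball u (2 * cmod d)"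
  have cK: "compact K" unfolding K_def by simp
  have fV: "finite (V \<inter> K)" and fE: "finite {(a, b). E a b \<and> closed_segment a b \<inter> K \<noteq> {}}"
    using pg_fin[OF pg cK] by blast+
  define ES where "ES = {(a, b). E a b \<and> closed_segment a b \<inter> K \<noteq> {} \<and> {a, b} \<noteq> {u, v}}"
  have fES: "finite ES" by (rule finite_subset[OF _ fE]) (auto simp: ES_def)
  define C where "C = (V \<inter> K) \<union> \<Union>((\<lambda>(a, b). closed_segment a b) ` ES)"
  have cC: "closed C" unfolding C_def
    using fV fES by (intro closed_Un finite_imp_closed closed_Union) auto
  define J where "J = (\<lambda>s. u + of_real s * d) ` {\<delta>..1-\<delta>}"
  have cJ: "compact J" unfolding J_def
    by (intro compact_continuous_image continuous_intros) auto
  have JC: "J \<inter> C = {}"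
  proof (rule ccontr)
    assume "J \<inter> C \<noteq> {}"
    then obtain s where s: "\<delta> \<le> s" "s \<le> 1 - \<delta>" and pC: "u + of_real s * d \<in> C"
      unfolding J_def by auto
    define p where "p = u + of_real s * d"
    have pseg: "p \<in> closed_segment u v" unfolding p_def d_def using s dl by (intro seg_paramI) auto
    have pu: "p \<noteq> u" using s dl d0 unfolding p_def by auto
    have pv: "p \<noteq> v"
    proof
      assume "p = v"
      hence "of_real (s - 1) * d = 0" unfolding p_def d_def by (simp add: algebra_simps)
      thus False using s dl d0 by simp
    qed
    show False
    proof (cases "p \<in> V")
      case True
      thus False using pg_vert[OF pg e _ pseg] pu pv by blast
    next
      case False
      then obtain a b where ab: "(a, b) \<in> ES" "p \<in> closed_segment a b"
        using pC unfolding C_def p_def by auto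
      hence "E a b" "{a, b} \<noteq> {u, v}" unfolding ES_def by auto
      hence "closed_segment u v \<inter> closed_segment a b \<subseteq> {u, v} \<inter> {a, b}"
        using pg_cross[OF pg e] by metis
      thus False using pseg ab pu pv by blast
    qed
  qed
  obtain \<epsilon>0 where e0: "\<epsilon>0 > 0" "\<forall>x\<in>J. \<forall>y\<in>C. \<epsilon>0 \<le> dist x y"
    using separate_compact_closed[OF cJ cC JC] by blast
  define \<epsilon> where "\<epsilon> = min 1 (\<epsilon>0 / cmod d)"
  have "\<epsilon> > 0" unfolding \<epsilon>_def using e0 nd by simp
  moreover have "u + of_real s * d + of_real t * \<i> * d \<notin> drawing V E"
    if st: "\<delta> \<le> s" "s \<le> 1 - \<delta>" "0 < \<bar>t\<bar>" "\<bar>t\<bar> < \<epsilon>" for s t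
  proof
    assume qD: "u + of_real s * d + of_real t * \<i> * d \<in> drawing V E"
    define p where "p = u + of_real s * d"
    define q where "q = u + of_real s * d + of_real t * \<i> * d"
    have pJ: "p \<in> J" unfolding J_def p_def using st by auto
    have "dist p q = \<bar>t\<bar> * cmod d" unfolding p_def q_def dist_norm by (simp add: norm_mult)
    also have "\<dots> < \<epsilon>0" using st(4) nd unfolding \<epsilon>_def by (simp add: field_simps)
    finally have dpq: "dist p q < \<epsilon>0" .
    have "dist u q = cmod (q - u)" by (simp add: dist_norm norm_minus_commute)
    also have "\<dots> = cmod (of_real s * d + of_real t * \<i> * d)" by (simp add: q_def)
    also have "\<dots> \<le> cmod (of_real s * d) + cmod (of_real t * \<i> * d)"
      by (rule norm_triangle_ineq)
    also have "\<dots> = \<bar>s\<bar> * cmod d + \<bar>t\<bar> * cmod d" by (simp add: norm_mult)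
    also have "\<dots> \<le> 1 * cmod d + 1 * cmod d"
      using st dl \<epsilon>_def by (intro add_mono mult_right_mono) auto
    finally have qK: "q \<in> K" unfolding K_def by simp
    have qnC: "q \<notin> C"
    proof
      assume "q \<in> C"
      hence "\<epsilon>0 \<le> dist p q" using e0(2) pJ by blast
      thus False using dpq by simp
    qed
    show False
    proof (cases "q \<in> V")
      case True thus False using qK qnC unfolding C_def by blast
    next
      case False
      then obtain a b where ab: "E a b" "q \<in> closed_segment a b" using qD drawing_iff q_def by metis
      show False
      proof (cases "{a, b} = {u, v}")
        case True
        hence "closed_segment a b = closed_segment u v"
          by (metis closed_segment_commute doubleton_eq_iff)
        then obtain s' where "q = u + of_real s' * d" using ab seg_param d_def by metis
        hence "(of_real (s' - s) - of_real t * \<i>) * d = 0" unfolding q_def by (simp add: algebra_simps)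
        hence "of_real (s' - s) - of_real t * \<i> = (0::complex)" using d0 by simp
        hence "Im (of_real (s' - s) - of_real t * \<i>) = 0" by simp
        thus False using st by simp
      next
        case False
        hence "(a, b) \<in> ES" using ab qK unfolding ES_def by auto
        thus False using ab qnC unfolding C_def by auto
      qed
    qed
  qed
  ultimately show ?thesis unfolding d_def by blast
qed

lemma face_disj: "F \<in> faces V E \<Longrightarrow> F \<inter> drawing V E = {}"
  unfolding faces_def using in_components_subset by blast

lemma face_conn:
  assumes "F \<in> faces V E" "connected T" "T \<inter> drawing V E = {}" "T \<inter> F \<noteq> {}"
  shows "T \<subseteq> F"
  using components_maximal[of F "- drawing V E" T] assms unfolding faces_def by blast

lemma faces_eq:
  assumes "F \<in> faces V E" "G \<in> faces V E" "x \<in> F" "x \<in> G"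
  shows "F = G"
  using components_eq[of F "- drawing V E" G] assms unfolding faces_def by blast

lemma right_left: "right_face V E u v = left_face V E v u"
proof -
  have "\<And>t::real. (u + v) / 2 - of_real t * \<i> * (v - u) = (v + u) / 2 + of_real t * \<i> * (u - v)"
    by (simp add: algebra_simps)
  thus ?thesis unfolding right_face_def left_face_def by simp
qed

lemma left_face_strip:
  assumes pg: "plane_graph V E" and e: "E u v"
  shows "left_face V E u v \<in> faces V E \<and>
    (\<forall>\<delta>. 0 < \<delta> \<and> \<delta> \<le> 1/2 \<longrightarrow> (\<exists>\<epsilon>>0. \<forall>s t. \<delta> \<le> s \<and> s \<le> 1 - \<delta> \<and> 0 < t \<and> t < \<epsilon> \<longrightarrow>
        u + of_real s * (v - u) + of_real t * \<i> * (v - u) \<in> left_face V E u v))"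
proof -
  define P where "P = (\<lambda>s t. u + of_real s * (v - u) + of_real t * \<i> * (v - u))"
  define S where "S = (\<lambda>\<delta> \<epsilon>. (\<lambda>p. P (fst p) (snd p)) ` ({\<delta>..1-\<delta>} \<times> {0<..<\<epsilon>}))"
  have Sconn: "connected (S \<delta> \<epsilon>)" for \<delta> \<epsilon>
    unfolding S_def P_def
    by (intro connected_continuous_image convex_connected convex_Times convex_real_interval continuous_intros)
  have strip': "\<exists>\<epsilon>>0. S \<delta> \<epsilon> \<inter> drawing V E = {}" if dd: "0 < \<delta>" "\<delta> \<le> 1/2" for \<delta>
  proof -
    obtain \<epsilon> where "\<epsilon> > 0" and h: "\<forall>s t. \<delta> \<le> s \<and> s \<le> 1 - \<delta> \<and> 0 < \<bar>t\<bar> \<and> \<bar>t\<bar> < \<epsilon> \<longrightarrow>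
           u + of_real s * (v - u) + of_real t * \<i> * (v - u) \<notin> drawing V E"
      using strip[OF pg e dd] by blast
    have "S \<delta> \<epsilon> \<inter> drawing V E = {}"
    proof (rule equals0I)
      fix x assume "x \<in> S \<delta> \<epsilon> \<inter> drawing V E"
      then obtain s t where st: "\<delta> \<le> s" "s \<le> 1 - \<delta>" "0 < t" "t < \<epsilon>" and x: "x = P s t" "x \<in> drawing V E"
        unfolding S_def by auto
      thus False using h[rule_format, of s t] unfolding P_def by auto
    qed
    thus ?thesis using \<open>\<epsilon> > 0\<close> by blast
  qed
  have Smono: "S \<delta> \<epsilon>' \<subseteq> S \<delta> \<epsilon>" if "\<epsilon>' \<le> \<epsilon>" for \<delta> \<epsilon> \<epsilon>'
    unfolding S_def using that by auto
  have Smem: "P s t \<in> S \<delta> \<epsilon>" if "\<delta> \<le> s" "s \<le> 1 - \<delta>" "0 < t" "t < \<epsilon>" for s t \<delta> \<epsilon>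
  proof -
    have "(s, t) \<in> {\<delta>..1-\<delta>} \<times> {0<..<\<epsilon>}" using that by auto
    thus ?thesis unfolding S_def by force
  qed
  obtain \<epsilon>0 where e0: "\<epsilon>0 > 0" "S (1/2) \<epsilon>0 \<inter> drawing V E = {}" using strip'[of "1/2"] by auto
  have S0ne: "P (1/2) (\<epsilon>0/2) \<in> S (1/2) \<epsilon>0" using e0 by (intro Smem) auto
  obtain C where C: "C \<in> components (- drawing V E)" "S (1/2) \<epsilon>0 \<subseteq> C"
    using exists_component_superset[of "S (1/2) \<epsilon>0" "- drawing V E"] e0 S0ne Sconn by blast
  have Cf: "C \<in> faces V E" using C unfolding faces_def by simp
  have mid: "(u + v) / 2 + of_real t * \<i> * (v - u) = P (1/2) t" for t
    unfolding P_def by (simp add: field_simps)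
  have ev: "\<forall>\<^sub>F t in at_right (0::real). (u + v) / 2 + of_real t * \<i> * (v - u) \<in> C"
  proof -
    have "\<forall>\<^sub>F t in at_right (0::real). t \<in> {0<..<\<epsilon>0}" using eventually_at_right_real e0 by blast
    thus ?thesis
    proof (rule eventually_mono)
      fix t :: real assume "t \<in> {0<..<\<epsilon>0}"
      hence "P (1/2) t \<in> S (1/2) \<epsilon>0" by (intro Smem) auto
      thus "(u + v) / 2 + of_real t * \<i> * (v - u) \<in> C" using mid C by auto
    qed
  qed
  have lf: "left_face V E u v = C"
    unfolding left_face_def
  proof (rule the_equality)
    show "C \<in> faces V E \<and> (\<forall>\<^sub>F t in at_right (0::real). (u + v) / 2 + of_real t * \<i> * (v - u) \<in> C)"
      using Cf ev by blast
  next
    fix F assume F: "F \<in> faces V E \<and> (\<forall>\<^sub>F t in at_right (0::real). (u + v) / 2 + of_real t * \<i> * (v - u) \<in> F)"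
    hence evb: "\<forall>\<^sub>F t in at_right (0::real). (u + v) / 2 + of_real t * \<i> * (v - u) \<in> F \<and> (u + v) / 2 + of_real t * \<i> * (v - u) \<in> C"
      using ev eventually_conj by blast
    obtain t where "(u + v) / 2 + of_real t * \<i> * (v - u) \<in> F" "(u + v) / 2 + of_real t * \<i> * (v - u) \<in> C"
      using eventually_happens[OF evb] trivial_limit_at_right_real by blast
    thus "F = C" using faces_eq[of F V E C] F Cf by blast
  qed
  have "\<exists>\<epsilon>>0. \<forall>s t. \<delta> \<le> s \<and> s \<le> 1 - \<delta> \<and> 0 < t \<and> t < \<epsilon> \<longrightarrow> P s t \<in> C"
    if d: "0 < \<delta>" "\<delta> \<le> 1/2" for \<delta>
  proof -
    obtain \<epsilon>1 where e1: "\<epsilon>1 > 0" "S \<delta> \<epsilon>1 \<inter> drawing V E = {}" using strip'[OF d] by auto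
    define \<epsilon> where "\<epsilon> = min \<epsilon>0 \<epsilon>1"
    have ep: "\<epsilon> > 0" using e0 e1 \<epsilon>_def by simp
    have dj: "S \<delta> \<epsilon> \<inter> drawing V E = {}" using e1 Smono[of \<epsilon> \<epsilon>1 \<delta>] \<epsilon>_def by auto
    have "P (1/2) (\<epsilon>/2) \<in> S \<delta> \<epsilon>" using d ep by (intro Smem) auto
    moreover have "P (1/2) (\<epsilon>/2) \<in> S (1/2) \<epsilon>0"
      using ep \<epsilon>_def by (intro Smem) auto
    hence "P (1/2) (\<epsilon>/2) \<in> C" using C(2) by blast
    ultimately have "S \<delta> \<epsilon> \<subseteq> C" using face_conn[OF Cf Sconn dj] by blast
    thus ?thesis using ep Smem by blast
  qed
  thus ?thesis using lf Cf unfolding P_def by auto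
qed

lemma lf_face: "plane_graph V E \<Longrightarrow> E u v \<Longrightarrow> left_face V E u v \<in> faces V E"
  using left_face_strip by blast

lemma lf_strip:
  assumes "plane_graph V E" "E u v" "0 < \<delta>" "\<delta> \<le> 1/2"
  shows "\<exists>\<epsilon>>0. \<forall>s t. \<delta> \<le> s \<and> s \<le> 1 - \<delta> \<and> 0 < t \<and> t < \<epsilon> \<longrightarrow>
        u + of_real s * (v - u) + of_real t * \<i> * (v - u) \<in> left_face V E u v"
  using left_face_strip[OF assms(1,2)] assms(3,4) by blast

lemma lf_closure:
  assumes pg: "plane_graph V E" and e: "E u v"
  shows "u \<in> closure (left_face V E u v) \<and> v \<in> closure (left_face V E u v)"
proof -
  define d where "d = v - u"
  have d0: "d \<noteq> 0" using pg_edge[OF pg e] d_def by auto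
  hence nd: "cmod d > 0" by simp
  have "(\<exists>y\<in>left_face V E u v. dist y u < r) \<and> (\<exists>y\<in>left_face V E u v. dist y v < r)" if r: "r > 0" for r
  proof -
    define \<delta> where "\<delta> = min (1/4) (r / (4 * cmod d))"
    have dp: "0 < \<delta>" "\<delta> \<le> 1/4" using r nd \<delta>_def by auto
    have "\<delta> \<le> r / (4 * cmod d)" unfolding \<delta>_def by simp
    hence "\<delta> * cmod d \<le> r / (4 * cmod d) * cmod d" using nd by (intro mult_right_mono) auto
    also have "\<dots> = r / 4" using nd by (simp add: field_simps)
    finally have dn: "\<delta> * cmod d \<le> r / 4" .
    obtain \<epsilon> where ep: "\<epsilon> > 0" and h: "\<forall>s t. \<delta> \<le> s \<and> s \<le> 1 - \<delta> \<and> 0 < t \<and> t < \<epsilon> \<longrightarrow>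
        u + of_real s * (v - u) + of_real t * \<i> * (v - u) \<in> left_face V E u v"
      using lf_strip[OF pg e dp(1)] dp by auto
    define t where "t = min (\<epsilon>/2) \<delta>"
    have tp: "0 < t" "t < \<epsilon>" "t \<le> \<delta>" using ep dp t_def by auto
    define y1 where "y1 = u + of_real \<delta> * d + of_real t * \<i> * d"
    define y2 where "y2 = u + of_real (1 - \<delta>) * d + of_real t * \<i> * d"
    have y1: "y1 \<in> left_face V E u v" unfolding y1_def d_def using h[rule_format, of \<delta> t] tp dp by simp
    have y2: "y2 \<in> left_face V E u v" unfolding y2_def d_def using h[rule_format, of "1 - \<delta>" t] tp dp by simp
    have "dist y1 u = cmod (of_real \<delta> * d + of_real t * \<i> * d)" unfolding y1_def dist_norm by simp
    also have "\<dots> \<le> cmod (of_real \<delta> * d) + cmod (of_real t * \<i> * d)" by (rule norm_triangle_ineq)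
    also have "\<dots> = \<delta> * cmod d + t * cmod d" using dp tp by (simp add: norm_mult)
    also have "\<dots> \<le> \<delta> * cmod d + \<delta> * cmod d" using tp nd by simp
    also have "\<dots> < r" using dn r by simp
    finally have 1: "dist y1 u < r" .
    have "dist y2 v = cmod (- (of_real \<delta> * d) + of_real t * \<i> * d)" unfolding y2_def dist_norm d_def
      by (simp add: algebra_simps)
    also have "\<dots> \<le> cmod (- (of_real \<delta> * d)) + cmod (of_real t * \<i> * d)" by (rule norm_triangle_ineq)
    also have "\<dots> = \<delta> * cmod d + t * cmod d" using dp tp by (simp add: norm_mult)
    also have "\<dots> \<le> \<delta> * cmod d + \<delta> * cmod d" using tp nd by simp
    also have "\<dots> < r" using dn r by simp
    finally have 2: "dist y2 v < r" .
    show ?thesis using 1 2 y1 y2 by blast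
  qed
  thus ?thesis unfolding closure_approachable by blast
qed

lemma lf_frontier:
  assumes pg: "plane_graph V E" and e: "E u v"
  shows "u \<in> V \<inter> frontier (left_face V E u v) \<and> v \<in> V \<inter> frontier (left_face V E u v)"
proof -
  have uv: "u \<in> V" "v \<in> V" using pg_edge[OF pg e] by auto
  have dj: "left_face V E u v \<inter> drawing V E = {}" using face_disj lf_face[OF pg e] by blast
  have "u \<notin> left_face V E u v" "v \<notin> left_face V E u v" using dj uv unfolding drawing_def by auto
  hence "u \<notin> interior (left_face V E u v)" "v \<notin> interior (left_face V E u v)"
    using interior_subset by blast+
  thus ?thesis using lf_closure[OF pg e] uv unfolding frontier_def by blast
qed

lemma rh_real:
  fixes p1 p2 q1 q2 d1 d2 :: real
  assumes h1: "p1^2 + p2^2 = 1" and h2: "q1^2 + q2^2 = 1"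
    and h3: "(p1 - d1)^2 + (p2 - d2)^2 = 1" and h4: "(q1 - d1)^2 + (q2 - d2)^2 = 1"
    and ne: "p1 \<noteq> q1 \<or> p2 \<noteq> q2" and d: "d1^2 + d2^2 \<noteq> 0"
  shows "p1 + q1 = d1 \<and> p2 + q2 = d2"
proof -
  have a: "(p1 - q1) * d1 + (p2 - q2) * d2 = 0" using h1 h2 h3 h4 by algebra
  have b: "(p1 - q1) * (p1 + q1) + (p2 - q2) * (p2 + q2) = 0" using h1 h2 by algebra
  have c: "(p1 + q1) * d1 + (p2 + q2) * d2 = d1^2 + d2^2" using h1 h2 h3 h4 by algebra
  have cr1: "(p1 - q1) * ((p1 + q1) * d2 - (p2 + q2) * d1) = 0" using a b by algebra
  have cr2: "(p2 - q2) * ((p1 + q1) * d2 - (p2 + q2) * d1) = 0" using a b by algebra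
  have cr: "(p1 + q1) * d2 - (p2 + q2) * d1 = 0" using cr1 cr2 ne by auto
  have "((p1 + q1 - d1)^2 + (p2 + q2 - d2)^2) * (d1^2 + d2^2) = 0" using c cr by algebra
  hence "(p1 + q1 - d1)^2 + (p2 + q2 - d2)^2 = 0" using d mult_eq_0_iff by blast
  hence "(p1 + q1 - d1)^2 = 0 \<and> (p2 + q2 - d2)^2 = 0"
    by (metis add_nonneg_eq_0_iff zero_le_power2)
  thus ?thesis by simp
qed

lemma cmod1: "cmod z = 1 \<Longrightarrow> (Re z)^2 + (Im z)^2 = 1"
  using cmod_power2[of z] by simp

lemma rhombus:
  fixes w b x y :: complex
  assumes "cmod (w - x) = 1" "cmod (b - x) = 1" "cmod (w - y) = 1" "cmod (b - y) = 1" "w \<noteq> b"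
  shows "x = y \<or> x + y = w + b"
proof (cases "x = y")
  case True thus ?thesis by simp
next
  case False
  define p where "p = x - w"
  define q where "q = y - w"
  define d where "d = b - w"
  have "cmod p = 1" "cmod q = 1" "cmod (p - d) = 1" "cmod (q - d) = 1"
    using assms unfolding p_def q_def d_def by (auto simp: norm_minus_commute)
  hence h: "(Re p)^2 + (Im p)^2 = 1" "(Re q)^2 + (Im q)^2 = 1"
    "(Re p - Re d)^2 + (Im p - Im d)^2 = 1" "(Re q - Re d)^2 + (Im q - Im d)^2 = 1"
    using cmod1 by fastforce+
  have ne: "Re p \<noteq> Re q \<or> Im p \<noteq> Im q" using False unfolding p_def q_def by (auto simp: complex_eq_iff)
  have "d \<noteq> 0" using assms(5) d_def by auto
  hence dn: "(Re d)^2 + (Im d)^2 \<noteq> 0" using cmod_power2[of d] by auto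
  have "Re p + Re q = Re d \<and> Im p + Im q = Im d" using rh_real[OF h ne dn] .
  hence "p + q = d" by (simp add: complex_eq_iff)
  thus ?thesis unfolding p_def q_def d_def by (simp add: algebra_simps)
qed

definition angp :: "complex \<Rightarrow> real" where
  "angp p = (SOME \<phi>. 0 < \<phi> \<and> \<phi> \<le> 2 * pi \<and> cis \<phi> = p)"

lemma cis_shift: "cis (a + 2 * pi) = cis a" "cis (a - 2 * pi) = cis a"
  using cis_mult[of a "2 * pi"] cis_divide[of a "2 * pi"] by simp_all

lemma cis_minus_pi: "cis (a - pi) = - cis a"
  using cis_divide[of a pi] by simp

lemma sgn_cis': "sgn (cis a) = cis a"
  by (simp add: sgn_div_norm)

lemma cis_inj:
  assumes "0 < a" "a \<le> 2 * pi" "0 < b" "b \<le> 2 * pi" "cis a = cis b"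
  shows "a = b"
proof -
  have h1: "-pi < a - pi" "a - pi \<le> pi" "-pi < b - pi" "b - pi \<le> pi" using assms by linarith+
  have A1: "Arg (cis (a - pi)) = a - pi" by (rule cis_Arg_unique[OF sgn_cis' h1(1,2)])
  have A2: "Arg (cis (b - pi)) = b - pi" by (rule cis_Arg_unique[OF sgn_cis' h1(3,4)])
  have A3: "cis (a - pi) = cis (b - pi)" using assms(5) by (simp add: cis_minus_pi)
  have "a - pi = b - pi" using A1 A2 A3 by metis
  thus ?thesis by simp
qed

lemma angp:
  assumes "cmod p = 1"
  shows "0 < angp p \<and> angp p \<le> 2 * pi \<and> cis (angp p) = p"
proof -
  have p0: "p \<noteq> 0" using assms by auto
  have sp: "sgn p = p" using assms by (simp add: sgn_div_norm)
  have ca: "cis (Arg p) = p" using cis_Arg[OF p0] sp by simp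
  have ab: "- pi < Arg p" "Arg p \<le> pi" using Arg_bounded[of p] by auto
  have "\<exists>\<phi>. 0 < \<phi> \<and> \<phi> \<le> 2 * pi \<and> cis \<phi> = p"
  proof (cases "Arg p > 0")
    case True
    have "Arg p \<le> 2 * pi" using ab pi_gt_zero by linarith
    thus ?thesis using True ca by blast
  next
    case False
    have "0 < Arg p + 2 * pi" "Arg p + 2 * pi \<le> 2 * pi" using ab False by linarith+
    moreover have "cis (Arg p + 2 * pi) = p" using ca cis_shift(1)[of "Arg p"] by simp
    ultimately show ?thesis by blast
  qed
  thus ?thesis unfolding angp_def by (rule someI_ex)
qed

lemma angp_eq:
  assumes "0 < \<phi>" "\<phi> \<le> 2 * pi" "cis \<phi> = p"
  shows "angp p = \<phi>"
proof -
  have "cmod p = 1" using assms(3) by auto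
  hence "0 < angp p" "angp p \<le> 2 * pi" "cis (angp p) = cis \<phi>" using angp[of p] assms(3) by auto
  thus ?thesis using cis_inj assms(1,2) by blast
qed

lemma angp_1: "angp 1 = 2 * pi"
  by (rule angp_eq) (auto simp: complex_eq_iff)

lemma angp_lt:
  assumes "cmod p = 1" "p \<noteq> 1"
  shows "angp p < 2 * pi"
proof -
  have h: "angp p \<le> 2 * pi" "cis (angp p) = p" using angp[OF assms(1)] by auto
  have "angp p \<noteq> 2 * pi"
  proof
    assume "angp p = 2 * pi"
    hence "p = cis (2 * pi)" using h by simp
    thus False using assms(2) by (simp add: complex_eq_iff)
  qed
  thus ?thesis using h by linarith
qed

lemma angp_mult:
  assumes "cmod p = 1" "cmod q = 1"
  shows "angp (p * q) = angp p + angp q \<or> angp (p * q) = angp p + angp q - 2 * pi"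
proof -
  have a: "0 < angp p" "angp p \<le> 2 * pi" "cis (angp p) = p" using angp[OF assms(1)] by auto
  have b: "0 < angp q" "angp q \<le> 2 * pi" "cis (angp q) = q" using angp[OF assms(2)] by auto
  have c: "cis (angp p + angp q) = p * q" using a b by (simp add: cis_mult[symmetric])
  show ?thesis
  proof (cases "angp p + angp q \<le> 2 * pi")
    case True
    have "0 < angp p + angp q" using a b by linarith
    thus ?thesis using angp_eq[OF _ True c] by auto
  next
    case False
    have "cis (angp p + angp q - 2 * pi) = p * q" using c cis_shift(2) by simp
    moreover have "0 < angp p + angp q - 2 * pi" "angp p + angp q - 2 * pi \<le> 2 * pi"
      using False a b by linarith+
    ultimately show ?thesis using angp_eq by blast
  qed
qed

lemma disc:
  assumes pg: "plane_graph V E" and wV: "w \<in> V"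
  shows "\<exists>r>0. r \<le> 1 \<and> (\<forall>b. E w b \<longrightarrow> r \<le> cmod (b - w)) \<and>
     (\<forall>p. cmod (p - w) < r \<longrightarrow> p \<in> drawing V E \<longrightarrow> p = w \<or> (\<exists>b. E w b \<and> p \<in> closed_segment w b))"
proof -
  define K where "K = cball w 1"
  have cK: "compact K" unfolding K_def by simp
  have fV: "finite (V \<inter> K)" and fE: "finite {(a, b). E a b \<and> closed_segment a b \<inter> K \<noteq> {}}"
    using pg_fin[OF pg cK] by blast+
  define ES where "ES = {(a, b). E a b \<and> closed_segment a b \<inter> K \<noteq> {} \<and> a \<noteq> w \<and> b \<noteq> w}"
  have fES: "finite ES" by (rule finite_subset[OF _ fE]) (auto simp: ES_def)
  define C where "C = (V \<inter> K - {w}) \<union> \<Union>((\<lambda>(a, b). closed_segment a b) ` ES)"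
  have cC: "closed C" unfolding C_def
    using fV fES by (intro closed_Un finite_imp_closed closed_Union) auto
  have wC: "w \<notin> C"
  proof
    assume "w \<in> C"
    then obtain a b where "(a, b) \<in> ES" "w \<in> closed_segment a b" unfolding C_def by auto
    thus False using pg_vert[OF pg _ wV] unfolding ES_def by blast
  qed
  obtain r0 where r0: "r0 > 0" "\<forall>x\<in>C. r0 \<le> dist w x" using separate_point_closed[OF cC wC] by blast
  define r where "r = min 1 r0"
  have rp: "r > 0" "r \<le> 1" "r \<le> r0" using r0 r_def by auto
  have nb: "r \<le> cmod (b - w)" if "E w b" for b
  proof (cases "cmod (b - w) \<le> 1")
    case True
    have "b \<in> V" "b \<noteq> w" using pg_edge[OF pg that] by auto
    moreover have "b \<in> K" using True unfolding K_def by (simp add: dist_norm norm_minus_commute)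
    ultimately have "b \<in> C" unfolding C_def by blast
    hence "r0 \<le> dist w b" using r0 by blast
    thus ?thesis using rp by (simp add: dist_norm norm_minus_commute)
  next
    case False thus ?thesis using rp by simp
  qed
  have "p = w \<or> (\<exists>b. E w b \<and> p \<in> closed_segment w b)"
    if p: "cmod (p - w) < r" "p \<in> drawing V E" for p
  proof -
    have dp: "dist w p < r0" using p rp by (simp add: dist_norm norm_minus_commute)
    have pC: "p \<notin> C" using r0 dp by force
    have pK: "p \<in> K" using p rp unfolding K_def by (simp add: dist_norm norm_minus_commute)
    show ?thesis
    proof (cases "p \<in> V")
      case True thus ?thesis using pC pK unfolding C_def by blast
    next
      case False
      then obtain a b where ab: "E a b" "p \<in> closed_segment a b" using p(2) drawing_iff by metis
      show ?thesis
      proof (cases "a = w")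
        case True thus ?thesis using ab by blast
      next
        case aw: False
        show ?thesis
        proof (cases "b = w")
          case True
          hence "E w a" using pg_edge[OF pg ab(1)] by simp
          moreover have "p \<in> closed_segment w a" using ab True closed_segment_commute by blast
          ultimately show ?thesis by blast
        next
          case False
          hence "(a, b) \<in> ES" using ab aw pK unfolding ES_def by auto
          hence "p \<in> C" using ab unfolding C_def by auto
          thus ?thesis using pC by blast
        qed
      qed
    qed
  qed
  thus ?thesis using rp nb by blast
qed

definition ud :: "complex \<Rightarrow> complex \<Rightarrow> complex" where "ud w b = sgn (b - w)"
definition ang :: "complex \<Rightarrow> complex \<Rightarrow> complex \<Rightarrow> real" where "ang w b c = angp (ud w c / ud w b)"
definition nxt :: "(complex \<Rightarrow> complex \<Rightarrow> bool) \<Rightarrow> complex \<Rightarrow> complex \<Rightarrow> complex" where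
  "nxt E w b = (SOME c. E w c \<and> (\<forall>c'. E w c' \<longrightarrow> ang w b c \<le> ang w b c'))"

lemma ud_norm: "b \<noteq> w \<Longrightarrow> cmod (ud w b) = 1"
  unfolding ud_def by (simp add: norm_sgn)

lemma ud_div: "ud w b = (b - w) / of_real (cmod (b - w))"
  unfolding ud_def by (simp add: sgn_div_norm scaleR_conv_of_real divide_inverse mult.commute)

lemma ud_eq: "b \<noteq> w \<Longrightarrow> b - w = of_real (cmod (b - w)) * ud w b"
  unfolding ud_div by simp

lemma ang_basic:
  assumes "b \<noteq> w" "c \<noteq> w"
  shows "0 < ang w b c \<and> ang w b c \<le> 2 * pi \<and> cis (ang w b c) * ud w b = ud w c"
proof -
  have n: "cmod (ud w c / ud w b) = 1" using ud_norm assms by (simp add: norm_divide)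
  have "ud w b \<noteq> 0" using ud_norm[OF assms(1)] by auto
  thus ?thesis using angp[OF n] unfolding ang_def by auto
qed

lemma ang_self: "b \<noteq> w \<Longrightarrow> ang w b b = 2 * pi"
proof -
  assume "b \<noteq> w"
  hence "ud w b \<noteq> 0" using ud_norm by force
  thus ?thesis unfolding ang_def using angp_1 by simp
qed

lemma dir_inj:
  assumes pg: "plane_graph V E" and eb: "E w b" and ec: "E w c" and bc: "b \<noteq> c"
  shows "ud w b \<noteq> ud w c"
proof
  assume eq: "ud w b = ud w c"
  have bw: "b \<noteq> w" and cw: "c \<noteq> w" using pg_edge[OF pg eb] pg_edge[OF pg ec] by auto
  define nb where "nb = cmod (b - w)"
  define nc where "nc = cmod (c - w)"
  have nbp: "nb > 0" "nc > 0" using bw cw nb_def nc_def by auto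
  define m where "m = min nb nc"
  have mp: "m > 0" "m \<le> nb" "m \<le> nc" using nbp m_def by auto
  define p where "p = w + of_real m * ud w b"
  have pe1: "p = w + of_real (m / nb) * (b - w)"
    unfolding p_def ud_div nb_def by (simp add: divide_inverse mult_ac)
  have h1: "0 \<le> m / nb" "m / nb \<le> 1" using mp nbp by auto
  have pb: "p \<in> closed_segment w b" by (subst pe1, rule seg_paramI[OF h1])
  have "p = w + of_real m * ud w c" using p_def eq by simp
  hence pe2: "p = w + of_real (m / nc) * (c - w)"
    unfolding ud_div nc_def by (simp add: divide_inverse mult_ac)
  have h2: "0 \<le> m / nc" "m / nc \<le> 1" using mp nbp by auto
  have pc: "p \<in> closed_segment w c" by (subst pe2, rule seg_paramI[OF h2])
  have pw: "p \<noteq> w" using mp ud_norm[OF bw] unfolding p_def by auto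
  have "{w, b} \<noteq> {w, c}" using bc bw by (metis doubleton_eq_iff)
  hence "closed_segment w b \<inter> closed_segment w c \<subseteq> {w, b} \<inter> {w, c}" using pg_cross[OF pg eb ec] by blast
  hence "p \<in> {w, b} \<inter> {w, c}" using pb pc by blast
  thus False using pw bc by blast
qed

lemma ang_lt:
  assumes pg: "plane_graph V E" and eb: "E w b" and ec: "E w c" and bc: "b \<noteq> c"
  shows "ang w b c < 2 * pi"
proof -
  have bw: "b \<noteq> w" and cw: "c \<noteq> w" using pg_edge[OF pg eb] pg_edge[OF pg ec] by auto
  have n: "cmod (ud w c / ud w b) = 1" using ud_norm bw cw by (simp add: norm_divide)
  have "ud w c / ud w b \<noteq> 1" using dir_inj[OF pg eb ec bc] by auto
  thus ?thesis unfolding ang_def using angp_lt[OF n] by simp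
qed

lemma ang_add:
  assumes "b1 \<noteq> w" "b2 \<noteq> w" "c \<noteq> w"
  shows "ang w b1 c = ang w b1 b2 + ang w b2 c \<or> ang w b1 c = ang w b1 b2 + ang w b2 c - 2 * pi"
proof -
  have n1: "cmod (ud w b2 / ud w b1) = 1" "cmod (ud w c / ud w b2) = 1"
    using ud_norm assms by (simp_all add: norm_divide)
  have "ud w b2 \<noteq> 0" using ud_norm[OF assms(2)] by auto
  hence "ud w c / ud w b1 = (ud w b2 / ud w b1) * (ud w c / ud w b2)" by simp
  thus ?thesis unfolding ang_def using angp_mult[OF n1] by simp
qed

lemma ang_sym:
  assumes pg: "plane_graph V E" and eb: "E w b1" and ec: "E w b2" and bc: "b1 \<noteq> b2"
  shows "ang w b1 b2 + ang w b2 b1 = 2 * pi"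
proof -
  have bw: "b1 \<noteq> w" and cw: "b2 \<noteq> w" using pg_edge[OF pg eb] pg_edge[OF pg ec] by auto
  have "ang w b1 b1 = ang w b1 b2 + ang w b2 b1 \<or> ang w b1 b1 = ang w b1 b2 + ang w b2 b1 - 2 * pi"
    using ang_add[OF bw cw bw] .
  moreover have "ang w b1 b1 = 2 * pi" using ang_self[OF bw] .
  moreover have "ang w b1 b2 < 2 * pi" "ang w b2 b1 < 2 * pi"
    using ang_lt[OF pg eb ec bc] ang_lt[OF pg ec eb] bc by auto
  ultimately show ?thesis by linarith
qed

lemma nxt_prop:
  assumes fin: "finite {c. E w c}" and eb: "E w b"
  shows "E w (nxt E w b) \<and> (\<forall>c'. E w c' \<longrightarrow> ang w b (nxt E w b) \<le> ang w b c')"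
proof -
  obtain c where "is_arg_min (ang w b) (\<lambda>x. x \<in> {c. E w c}) c"
    using ex_is_arg_min_if_finite[OF fin, of "ang w b"] eb by blast
  hence "E w c \<and> (\<forall>c'. E w c' \<longrightarrow> ang w b c \<le> ang w b c')"
    unfolding is_arg_min_def by (auto simp: not_less)
  hence "\<exists>c. E w c \<and> (\<forall>c'. E w c' \<longrightarrow> ang w b c \<le> ang w b c')" by blast
  thus ?thesis unfolding nxt_def by (rule someI_ex)
qed

lemma nxt_inj:
  assumes pg: "plane_graph V E" and fin: "finite {c. E w c}"
  shows "inj_on (nxt E w) {c. E w c}"
proof (rule inj_onI)
  fix b1 b2 assume b1: "b1 \<in> {c. E w c}" and b2: "b2 \<in> {c. E w c}" and eq: "nxt E w b1 = nxt E w b2"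
  show "b1 = b2"
  proof (rule ccontr)
    assume ne: "b1 \<noteq> b2"
    have e1: "E w b1" and e2: "E w b2" using b1 b2 by auto
    define c where "c = nxt E w b1"
    have P1: "E w c" "\<forall>c'. E w c' \<longrightarrow> ang w b1 c \<le> ang w b1 c'" using nxt_prop[where E=E and w=w and b=b1, OF fin e1] c_def by auto
    have P2: "\<forall>c'. E w c' \<longrightarrow> ang w b2 c \<le> ang w b2 c'" using nxt_prop[where E=E and w=w and b=b2, OF fin e2] c_def eq by auto
    have w1: "b1 \<noteq> w" and w2: "b2 \<noteq> w" and wc: "c \<noteq> w"
      using pg_edge[OF pg e1] pg_edge[OF pg e2] pg_edge[OF pg P1(1)] by auto
    have l12: "ang w b1 b2 < 2 * pi" using ang_lt[OF pg e1 e2 ne] .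
    have l21: "ang w b2 b1 < 2 * pi" using ang_lt[OF pg e2 e1] ne by auto
    have c1: "c \<noteq> b1"
    proof
      assume "c = b1"
      hence "ang w b1 b1 \<le> ang w b1 b2" using P1(2) e2 by auto
      thus False using ang_self[OF w1] l12 by simp
    qed
    have c2: "c \<noteq> b2"
    proof
      assume "c = b2"
      hence "ang w b2 b2 \<le> ang w b2 b1" using P2 e1 by auto
      thus False using ang_self[OF w2] l21 by simp
    qed
    have s: "ang w b1 b2 + ang w b2 b1 = 2 * pi" using ang_sym[OF pg e1 e2 ne] .
    have a1: "ang w b1 c \<le> ang w b1 b2" using P1(2) e2 by auto
    have a2: "ang w b2 c \<le> ang w b2 b1" using P2 e1 by auto
    have p1: "0 < ang w b1 c" and p2: "0 < ang w b2 c" using ang_basic w1 w2 wc by auto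
    have "ang w b1 c = ang w b1 b2 + ang w b2 c \<or> ang w b1 c = ang w b1 b2 + ang w b2 c - 2 * pi"
      using ang_add[OF w1 w2 wc] .
    thus False using s a1 a2 p1 p2 by linarith
  qed
qed

lemma nxt_bij:
  assumes pg: "plane_graph V E" and fin: "finite {c. E w c}"
  shows "bij_betw (nxt E w) {c. E w c} {c. E w c}"
proof -
  have "nxt E w ` {c. E w c} \<subseteq> {c. E w c}" using nxt_prop[where E=E and w=w, OF fin] by auto
  moreover have "inj_on (nxt E w) {c. E w c}" using nxt_inj[OF pg fin] .
  ultimately show ?thesis using endo_inj_surj[OF fin] unfolding bij_betw_def by blast
qed

lemma ident1: "(n::real) \<noteq> 0 \<Longrightarrow> w + of_real \<rho> * ((b - w) / of_real n) * (of_real co + \<i> * of_real si) = w + of_real (\<rho> * co / n) * (b - w) + of_real (\<rho> * si / n) * \<i> * (b - w)"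
  by (simp add: field_simps)
lemma ident2: "(n::real) \<noteq> 0 \<Longrightarrow> w + of_real \<rho> * ((c - w) / of_real n) * (of_real co - \<i> * of_real si) = c + of_real (1 - \<rho> * co / n) * (w - c) + of_real (\<rho> * si / n) * \<i> * (w - c)"
  by (simp add: field_simps)
lemma cis_ri: "cis x = of_real (cos x) + \<i> * of_real (sin x)"
  by (simp add: complex_eq_iff)

lemma arc:
  assumes pg: "plane_graph V E" and fin: "finite {c. E w c}" and eb: "E w b"
    and rp: "r > 0" and rn: "\<forall>b. E w b \<longrightarrow> r \<le> cmod (b - w)"
    and rd: "\<forall>p. cmod (p - w) < r \<longrightarrow> p \<in> drawing V E \<longrightarrow> p = w \<or> (\<exists>b. E w b \<and> p \<in> closed_segment w b)"
  shows "left_face V E w b = right_face V E w (nxt E w b)"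
proof -
  define c where "c = nxt E w b"
  have ec: "E w c" and cmin: "\<forall>c'. E w c' \<longrightarrow> ang w b c \<le> ang w b c'"
    using nxt_prop[where E=E and w=w and b=b, OF fin eb] c_def by auto
  have bw: "b \<noteq> w" and cw: "c \<noteq> w" using pg_edge[OF pg eb] pg_edge[OF pg ec] by auto
  have ecw: "E c w" using pg_edge[OF pg ec] by auto
  define A where "A = ang w b c"
  have A: "0 < A" "A \<le> 2 * pi" "cis A * ud w b = ud w c" using ang_basic[OF bw cw] A_def by auto
  define \<rho> where "\<rho> = r / 2"
  define nb where "nb = cmod (b - w)"
  define nc where "nc = cmod (c - w)"
  have nbr: "r \<le> nb" "r \<le> nc" using rn eb ec nb_def nc_def by auto
  have nbp: "nb > 0" "nc > 0" using nbr rp by auto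
  have rho: "0 < \<rho>" "\<rho> < r" "\<rho> / nb \<le> 1/2" "\<rho> / nc \<le> 1/2"
    using rp nbr nbp unfolding \<rho>_def by (auto simp: field_simps)
  define \<delta>b where "\<delta>b = \<rho> / (2 * nb)"
  define \<delta>c where "\<delta>c = \<rho> / (2 * nc)"
  have db: "0 < \<delta>b" "\<delta>b \<le> 1/2" "0 < \<delta>c" "\<delta>c \<le> 1/2"
    using rho nbp unfolding \<delta>b_def \<delta>c_def by (auto simp: field_simps)
  obtain \<epsilon>L where eL: "\<epsilon>L > 0" and hL: "\<forall>s t. \<delta>b \<le> s \<and> s \<le> 1 - \<delta>b \<and> 0 < t \<and> t < \<epsilon>L \<longrightarrow>
        w + of_real s * (b - w) + of_real t * \<i> * (b - w) \<in> left_face V E w b"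
    using lf_strip[OF pg eb db(1,2)] by blast
  obtain \<epsilon>R where eR: "\<epsilon>R > 0" and hR: "\<forall>s t. \<delta>c \<le> s \<and> s \<le> 1 - \<delta>c \<and> 0 < t \<and> t < \<epsilon>R \<longrightarrow>
        c + of_real s * (w - c) + of_real t * \<i> * (w - c) \<in> left_face V E c w"
    using lf_strip[OF pg ecw db(3,4)] by blast
  define \<eta> where "\<eta> = min (min \<epsilon>L \<epsilon>R) (min (A / 3) (pi / 3))"
  have et: "0 < \<eta>" "\<eta> \<le> \<epsilon>L" "\<eta> \<le> \<epsilon>R" "3 * \<eta> \<le> A" "\<eta> \<le> pi / 3"
    using eL eR A pi_gt_zero unfolding \<eta>_def by auto
  have cos1: "1/2 \<le> cos \<eta>" using cos_monotone_0_pi_le[of \<eta> "pi/3"] cos_60 et by auto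
  have cos2: "cos \<eta> \<le> 1" by simp
  have sin1: "0 < sin \<eta>" using sin_gt_zero[of \<eta>] et pi_gt_zero by linarith
  have sin2: "sin \<eta> \<le> \<eta>" using sin_x_le_x[of \<eta>] et by simp
  define \<gamma> where "\<gamma> = (\<lambda>\<phi>. w + of_real \<rho> * ud w b * cis \<phi>)"
  define arc where "arc = \<gamma> ` {\<eta>..A - \<eta>}"
  have conn: "connected arc" unfolding arc_def \<gamma>_def
    by (intro connected_continuous_image continuous_intros) auto
  have dj: "arc \<inter> drawing V E = {}"
  proof (rule equals0I)
    fix p assume "p \<in> arc \<inter> drawing V E"
    then obtain \<phi> where \<phi>: "\<eta> \<le> \<phi>" "\<phi> \<le> A - \<eta>" and p: "p = \<gamma> \<phi>" "p \<in> drawing V E"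
      unfolding arc_def by auto
    have udn: "cmod (ud w b) = 1" using ud_norm[OF bw] .
    have np: "cmod (p - w) = \<rho>" using p(1) rho udn unfolding \<gamma>_def by (simp add: norm_mult)
    hence "cmod (p - w) < r" using rho by simp
    hence "p = w \<or> (\<exists>b. E w b \<and> p \<in> closed_segment w b)" using rd p(2) by blast
    thus False
    proof
      assume "p = w" thus False using np rho by simp
    next
      assume "\<exists>b'. E w b' \<and> p \<in> closed_segment w b'"
      then obtain b' where eb': "E w b'" and pb': "p \<in> closed_segment w b'" by blast
      obtain s where s: "0 \<le> s" "s \<le> 1" "p = w + of_real s * (b' - w)" using seg_param[OF pb'] by blast
      have b'w: "b' \<noteq> w" using pg_edge[OF pg eb'] by auto
      define nb' where "nb' = cmod (b' - w)"
      have nb'p: "nb' > 0" using b'w nb'_def by simp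
      have e1: "of_real \<rho> * (ud w b * cis \<phi>) = of_real (s * nb') * ud w b'"
        using p(1) s(3) ud_eq[OF b'w] unfolding \<gamma>_def nb'_def by (simp add: mult_ac)
      hence "cmod (of_real \<rho> * (ud w b * cis \<phi>)) = cmod (of_real (s * nb') * ud w b')" by simp
      hence "\<rho> = s * nb'" using rho udn ud_norm[OF b'w] s nb'p by (simp add: norm_mult)
      hence "of_real \<rho> * (ud w b * cis \<phi>) = of_real \<rho> * ud w b'" using e1 by simp
      hence e2: "ud w b * cis \<phi> = ud w b'" using rho by simp
      have "ud w b \<noteq> 0" using udn by auto
      hence "cis \<phi> = ud w b' / ud w b" using e2 by (simp add: field_simps)
      hence "ang w b b' = \<phi>" unfolding ang_def using \<phi> et A by (intro angp_eq) auto
      moreover have "A \<le> ang w b b'" using cmin eb' A_def by auto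
      ultimately show False using \<phi> et by linarith
    qed
  qed
  have g1: "\<gamma> \<eta> \<in> left_face V E w b"
  proof -
    have eq: "\<gamma> \<eta> = w + of_real (\<rho> * cos \<eta> / nb) * (b - w) + of_real (\<rho> * sin \<eta> / nb) * \<i> * (b - w)"
      unfolding \<gamma>_def ud_div cis_ri nb_def[symmetric] using ident1 nbp by simp
    have "\<delta>b \<le> \<rho> * cos \<eta> / nb"
    proof -
      have "\<rho> * (1/2) \<le> \<rho> * cos \<eta>" using cos1 rho by (intro mult_left_mono) auto
      thus ?thesis unfolding \<delta>b_def using nbp by (simp add: field_simps)
    qed
    moreover have "\<rho> * cos \<eta> / nb \<le> 1 - \<delta>b"
    proof -
      have "\<rho> * cos \<eta> \<le> \<rho>" using cos2 rho by (simp add: mult_left_le)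
      hence "\<rho> * cos \<eta> / nb \<le> \<rho> / nb" using nbp by (simp add: divide_right_mono)
      thus ?thesis using rho db by linarith
    qed
    moreover have "0 < \<rho> * sin \<eta> / nb" using rho sin1 nbp by simp
    moreover have "\<rho> * sin \<eta> / nb < \<epsilon>L"
    proof -
      have "\<rho> * sin \<eta> \<le> \<rho> * \<eta>" using sin2 rho by (intro mult_left_mono) auto
      hence "\<rho> * sin \<eta> / nb \<le> \<rho> * \<eta> / nb" using nbp by (simp add: divide_right_mono)
      also have "\<dots> = (\<rho> / nb) * \<eta>" by simp
      also have "\<dots> \<le> (1/2) * \<eta>" using rho et by (intro mult_right_mono) auto
      finally show ?thesis using et by linarith
    qed
    ultimately show ?thesis unfolding eq using hL by blast
  qed
  have g2: "\<gamma> (A - \<eta>) \<in> left_face V E c w"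
  proof -
    have "cis (A - \<eta>) = cis A * cis (- \<eta>)" by (simp add: cis_mult)
    hence "\<gamma> (A - \<eta>) = w + of_real \<rho> * (cis A * ud w b) * cis (- \<eta>)" unfolding \<gamma>_def by (simp add: mult_ac)
    also have "\<dots> = w + of_real \<rho> * ud w c * cis (- \<eta>)" using A by simp
    finally have eq: "\<gamma> (A - \<eta>) = c + of_real (1 - \<rho> * cos \<eta> / nc) * (w - c) + of_real (\<rho> * sin \<eta> / nc) * \<i> * (w - c)"
      unfolding ud_div cis_ri nc_def[symmetric] using ident2 nbp by simp
    have "\<delta>c \<le> \<rho> * cos \<eta> / nc"
    proof -
      have "\<rho> * (1/2) \<le> \<rho> * cos \<eta>" using cos1 rho by (intro mult_left_mono) auto
      thus ?thesis unfolding \<delta>c_def using nbp by (simp add: field_simps)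
    qed
    moreover have "\<rho> * cos \<eta> / nc \<le> 1 - \<delta>c"
    proof -
      have "\<rho> * cos \<eta> \<le> \<rho>" using cos2 rho by (simp add: mult_left_le)
      hence "\<rho> * cos \<eta> / nc \<le> \<rho> / nc" using nbp by (simp add: divide_right_mono)
      thus ?thesis using rho db by linarith
    qed
    moreover have "0 < \<rho> * sin \<eta> / nc" using rho sin1 nbp by simp
    moreover have "\<rho> * sin \<eta> / nc < \<epsilon>R"
    proof -
      have "\<rho> * sin \<eta> \<le> \<rho> * \<eta>" using sin2 rho by (intro mult_left_mono) auto
      hence "\<rho> * sin \<eta> / nc \<le> \<rho> * \<eta> / nc" using nbp by (simp add: divide_right_mono)
      also have "\<dots> = (\<rho> / nc) * \<eta>" by simp
      also have "\<dots> \<le> (1/2) * \<eta>" using rho et by (intro mult_right_mono) auto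
      finally show ?thesis using et by linarith
    qed
    ultimately have "\<delta>c \<le> 1 - \<rho> * cos \<eta> / nc \<and> 1 - \<rho> * cos \<eta> / nc \<le> 1 - \<delta>c \<and> 0 < \<rho> * sin \<eta> / nc \<and> \<rho> * sin \<eta> / nc < \<epsilon>R"
      by linarith
    thus ?thesis unfolding eq using hR by blast
  qed
  have a1: "\<gamma> \<eta> \<in> arc" "\<gamma> (A - \<eta>) \<in> arc" unfolding arc_def using et by auto
  have lfb: "left_face V E w b \<in> faces V E" using lf_face[OF pg eb] .
  have lfc: "left_face V E c w \<in> faces V E" using lf_face[OF pg ecw] .
  have "arc \<subseteq> left_face V E w b" using face_conn[OF lfb conn dj] a1 g1 by blast
  hence "left_face V E w b = left_face V E c w" using faces_eq[OF lfb lfc _ g2] a1 by blast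
  thus ?thesis using right_left c_def by metis
qed

lemma sp_use:
  assumes sp: "special_dafun V E B f" and re: "rhombus_edge V E u F" and z: "z \<noteq> rdir V B u F"
  shows "f (Inr F) z = (if circumcenter V F - u = rdir V B u F
                     then f (Inl u) z / (z - rdir V B u F)
                     else f (Inl u) z * (z - rdir V B u F))"
    and "f (Inl u) z = (if u - circumcenter V F = rdir V B u F
                     then f (Inr F) z / (z - rdir V B u F)
                     else f (Inr F) z * (z - rdir V B u F))"
proof -
  have h: "\<forall>(v, v') \<in> {(Inl u, Inr F), (Inr F, Inl u)}. \<forall>z. z \<noteq> rdir V B u F \<longrightarrow>
           f v' z = (if rpos V v' - rpos V v = rdir V B u F
                     then f v z / (z - rdir V B u F)
                     else f v z * (z - rdir V B u F))"
    using sp re unfolding special_dafun_def by blast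
  show "f (Inr F) z = (if circumcenter V F - u = rdir V B u F
                     then f (Inl u) z / (z - rdir V B u F)
                     else f (Inl u) z * (z - rdir V B u F))"
    using h z by simp
  show "f (Inl u) z = (if u - circumcenter V F = rdir V B u F
                     then f (Inr F) z / (z - rdir V B u F)
                     else f (Inr F) z * (z - rdir V B u F))"
    using h z by simp
qed

lemma iso_pg: "isoradial V E \<Longrightarrow> plane_graph V E"
  unfolding isoradial_def by (erule conjunct1)

lemma circ:
  assumes "isoradial V E" "F \<in> faces V E"
  shows "inscribed_center V F (circumcenter V F)"
proof -
  have "\<exists>c. inscribed_center V F c" using assms unfolding isoradial_def by blast
  thus ?thesis unfolding circumcenter_def by (rule someI_ex)
qed

lemma term_eq:
  assumes iso: "isoradial V E" and sp: "special_dafun V E B f"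
    and wB: "w \<notin> B" and bB: "b \<in> B" and eb: "E w b"
    and z: "z \<notin> sing_pts V E B b"
  shows "dbar V E B w b * f (Inl b) z =
     \<i> * f (Inl w) z * (1 / (z - (circumcenter V (right_face V E w b) - w))
                        - 1 / (z - (circumcenter V (left_face V E w b) - w)))"
proof -
  have pg: "plane_graph V E" using iso_pg[OF iso] .
  have ebw: "E b w" using pg_edge[OF pg eb] by auto
  have wb: "w \<noteq> b" using pg_edge[OF pg eb] by auto
  define X where "X = right_face V E w b"
  define Y where "Y = left_face V E w b"
  define x where "x = circumcenter V X"
  define y where "y = circumcenter V Y"
  have XL: "X = left_face V E b w" unfolding X_def by (rule right_left)
  have YR: "Y = right_face V E b w" unfolding Y_def by (rule right_left[symmetric])
  have Xf: "X \<in> faces V E" unfolding XL by (rule lf_face[OF pg ebw])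
  have Yf: "Y \<in> faces V E" unfolding Y_def by (rule lf_face[OF pg eb])
  have ix: "inscribed_center V X x" using circ[OF iso Xf] x_def by simp
  have iy: "inscribed_center V Y y" using circ[OF iso Yf] y_def by simp
  have fX: "b \<in> V \<inter> frontier X" "w \<in> V \<inter> frontier X" using lf_frontier[OF pg ebw] XL by auto
  have fY: "w \<in> V \<inter> frontier Y" "b \<in> V \<inter> frontier Y" using lf_frontier[OF pg eb] Y_def by auto
  have d: "cmod (w - x) = 1" "cmod (b - x) = 1" "cmod (w - y) = 1" "cmod (b - y) = 1"
    using ix iy fX fY unfolding inscribed_center_def by auto
  have dbar: "dbar V E B w b = \<i> * (x - y)"
    unfolding dbar_def dbar_wb_def x_def y_def X_def Y_def using eb wB by simp
  show ?thesis
  proof (cases "x = y")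
    case True thus ?thesis unfolding dbar x_def y_def X_def Y_def by simp
  next
    case False
    hence rh: "x + y = w + b" using rhombus[OF d wb] by blast
    have reX: "rhombus_edge V E b X" unfolding rhombus_edge_def XL using ebw by blast
    have reY: "rhombus_edge V E b Y" unfolding rhombus_edge_def YR using ebw by blast
    have reXw: "rhombus_edge V E w X" unfolding rhombus_edge_def X_def using eb by blast
    have rdbX: "rdir V B b X = b - x" unfolding rdir_def x_def using bB by simp
    have rdbY: "rdir V B b Y = b - y" unfolding rdir_def y_def using bB by simp
    have rdwX: "rdir V B w X = x - w" unfolding rdir_def x_def using wB by simp
    have z1: "z \<noteq> b - x" using z reX rdbX unfolding sing_pts_def by force
    have z2: "z \<noteq> b - y" using z reY rdbY unfolding sing_pts_def by force
    have bx: "b - x = y - w" and by': "b - y = x - w" using rh by (simp_all add: algebra_simps)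
    have zx: "z \<noteq> x - w" using z2 by' by simp
    have zy: "z \<noteq> y - w" using z1 bx by simp
    have fXz: "f (Inr X) z = f (Inl w) z / (z - (x - w))"
      using sp_use(1)[OF sp reXw, of z] rdwX zx x_def by simp
    have fbz: "f (Inl b) z = f (Inr X) z / (z - (b - x))"
      using sp_use(2)[OF sp reX, of z] rdbX z1 x_def by simp
    have fb: "f (Inl b) z = f (Inl w) z / ((z - (x - w)) * (z - (y - w)))"
      using fXz fbz bx by simp
    have n1: "z - (x - w) \<noteq> 0" and n2: "z - (y - w) \<noteq> 0" using zx zy by auto
    have "dbar V E B w b * f (Inl b) z = \<i> * (x - y) * (f (Inl w) z / ((z - (x - w)) * (z - (y - w))))"
      using dbar fb by simp
    also have "\<dots> = \<i> * f (Inl w) z * (1 / (z - (x - w)) - 1 / (z - (y - w)))"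
      using n1 n2 by (simp add: field_simps)
    finally show ?thesis unfolding x_def y_def X_def Y_def .
  qed
qed

lemma nbrs_fin:
  assumes pg: "plane_graph V E"
  shows "finite {c. E w c}"
proof -
  have "finite {(u, v). E u v \<and> closed_segment u v \<inter> {w} \<noteq> {}}" using pg_fin[OF pg, of "{w}"] by simp
  hence "finite (snd ` {(u, v). E u v \<and> closed_segment u v \<inter> {w} \<noteq> {}})" by simp
  moreover have "{c. E w c} \<subseteq> snd ` {(u, v). E u v \<and> closed_segment u v \<inter> {w} \<noteq> {}}"
  proof
    fix c assume "c \<in> {c. E w c}"
    hence "(w, c) \<in> {(u, v). E u v \<and> closed_segment u v \<inter> {w} \<noteq> {}}" by auto
    thus "c \<in> snd ` {(u, v). E u v \<and> closed_segment u v \<inter> {w} \<noteq> {}}" by force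
  qed
  ultimately show ?thesis by (rule finite_subset[rotated])
qed

lemma pointwise:
  assumes iso: "isoradial V E" and bip: "bipartite_col V E B" and sp: "special_dafun V E B f"
    and wV: "w \<in> V - B"
    and z: "\<forall>b\<in>{b \<in> B. E w b}. z \<notin> sing_pts V E B b"
  shows "(\<Sum>b\<in>{b \<in> B. E w b}. dbar V E B w b * f (Inl b) z) = 0"
proof -
  have pg: "plane_graph V E" using iso_pg[OF iso] .
  have wB: "w \<notin> B" "w \<in> V" using wV by auto
  have N: "{b \<in> B. E w b} = {c. E w c}" using bip wB unfolding bipartite_col_def by blast
  have fin: "finite {c. E w c}" using nbrs_fin[OF pg] .
  obtain r where r: "r > 0" "\<forall>b. E w b \<longrightarrow> r \<le> cmod (b - w)"
      "\<forall>p. cmod (p - w) < r \<longrightarrow> p \<in> drawing V E \<longrightarrow> p = w \<or> (\<exists>b. E w b \<and> p \<in> closed_segment w b)"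
    using disc[OF pg wB(2)] by blast
  define h where "h = (\<lambda>c. 1 / (z - (c - w)))"
  define g where "g = f (Inl w) z"
  have t: "dbar V E B w b * f (Inl b) z = \<i> * g * (h (circumcenter V (right_face V E w b)) - h (circumcenter V (left_face V E w b)))"
    if "b \<in> {c. E w c}" for b
  proof -
    have eb: "E w b" and bB: "b \<in> B" using that N by auto
    have "z \<notin> sing_pts V E B b" using z N that by auto
    thus ?thesis using term_eq[OF iso sp wB(1) bB eb] unfolding h_def g_def by simp
  qed
  have lr: "(\<Sum>b\<in>{c. E w c}. h (circumcenter V (left_face V E w b))) =
            (\<Sum>b\<in>{c. E w c}. h (circumcenter V (right_face V E w b)))"
  proof -
    have "(\<Sum>b\<in>{c. E w c}. h (circumcenter V (left_face V E w b))) =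
          (\<Sum>b\<in>{c. E w c}. h (circumcenter V (right_face V E w (nxt E w b))))"
      using arc[OF pg fin _ r(1) r(2) r(3)] by (intro sum.cong) auto
    also have "\<dots> = (\<Sum>b\<in>{c. E w c}. h (circumcenter V (right_face V E w b)))"
      using sum.reindex_bij_betw[OF nxt_bij[OF pg fin], of "\<lambda>b. h (circumcenter V (right_face V E w b))"] .
    finally show ?thesis .
  qed
  have "(\<Sum>b\<in>{b \<in> B. E w b}. dbar V E B w b * f (Inl b) z) =
        (\<Sum>b\<in>{c. E w c}. \<i> * g * (h (circumcenter V (right_face V E w b)) - h (circumcenter V (left_face V E w b))))"
    unfolding N using t by (intro sum.cong) auto
  also have "\<dots> = \<i> * g * ((\<Sum>b\<in>{c. E w c}. h (circumcenter V (right_face V E w b))) -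
                            (\<Sum>b\<in>{c. E w c}. h (circumcenter V (left_face V E w b))))"
    by (simp only: sum_distrib_left[symmetric] sum_subtractf)
  also have "\<dots> = 0" using lr by simp
  finally show ?thesis .
qed

theorem theorem9p1:
  fixes V B :: "complex set" and E :: "complex \<Rightarrow> complex \<Rightarrow> bool"
    and f :: "rvert \<Rightarrow> complex \<Rightarrow> complex" and \<mu> :: "complex measure"
  assumes "isoradial V E"
    and "bipartite_col V E B"
    and "special_dafun V E B f"
    and "sets \<mu> = sets borel"
    and "\<forall>b \<in> B. integrable \<mu> (f (Inl b)) \<and> (AE z in \<mu>. z \<notin> sing_pts V E B b)"
  shows "\<forall>w \<in> V - B.
           (\<Sum>b \<in> {b \<in> B. E w b}. dbar V E B w b * (\<integral>z. f (Inl b) z \<partial>\<mu>)) = 0"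
proof
  fix w assume wV: "w \<in> V - B"
  define N where "N = {b \<in> B. E w b}"
  have pg: "plane_graph V E" using iso_pg[OF assms(1)] .
  have finN: "finite N" unfolding N_def by (rule finite_subset[OF _ nbrs_fin[OF pg, of w]]) auto
  have int: "integrable \<mu> (f (Inl b))" if "b \<in> N" for b using assms(5) that N_def by auto
  have int2: "integrable \<mu> (\<lambda>z. dbar V E B w b * f (Inl b) z)" if "b \<in> N" for b
    using int[OF that] by simp
  have ae: "AE z in \<mu>. \<forall>b\<in>N. z \<notin> sing_pts V E B b"
    using finN assms(5) N_def by (intro AE_finite_allI) auto
  have "(\<Sum>b\<in>N. dbar V E B w b * (\<integral>z. f (Inl b) z \<partial>\<mu>)) = (\<Sum>b\<in>N. (\<integral>z. dbar V E B w b * f (Inl b) z \<partial>\<mu>))"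
    by simp
  also have "\<dots> = (\<integral>z. (\<Sum>b\<in>N. dbar V E B w b * f (Inl b) z) \<partial>\<mu>)"
    using Bochner_Integration.integral_sum[where I=N and M=\<mu> and f="\<lambda>b z. dbar V E B w b * f (Inl b) z"] int2 by simp
  also have "\<dots> = (\<integral>z. 0 \<partial>\<mu>)"
  proof (rule integral_cong_AE)
    show "(\<lambda>z. \<Sum>b\<in>N. dbar V E B w b * f (Inl b) z) \<in> borel_measurable \<mu>"
      using int2 by (intro borel_measurable_integrable integrable_sum) auto
    show "(\<lambda>z. 0::complex) \<in> borel_measurable \<mu>" by simp
    show "AE z in \<mu>. (\<Sum>b\<in>N. dbar V E B w b * f (Inl b) z) = 0"
      using ae by eventually_elim (use pointwise[OF assms(1,2,3) wV] N_def in auto)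
  qed
  also have "\<dots> = 0" by simp
  finally show "(\<Sum>b \<in> {b \<in> B. E w b}. dbar V E B w b * (\<integral>z. f (Inl b) z \<partial>\<mu>)) = 0"
    unfolding N_def .
qed

end
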